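(* (1) $I$ is a closed (two-sided) ideal in $A^\mathcal U$ (and $I\subseteq A^{c\mathcal U}$). (2) The $\mathrm{C}^*$-algebra $A^{c\mathcal U}/I$ is unital. (3) The map $q\circ\Delta:A\to A^{c\mathcal U}/I$ is injective, where $q:A^{c\mathcal U}\to A^{c\mathcal U}/I$ is the quotient map and $\Delta(a)=(a,a,\dots)^\bullet$ is the diagonal embedding. (4) $(q\circ\Delta)(A)$ is an essential ideal in $A^{c\mathcal U}/I$.
   Context: $X$ is a second countable, locally compact space with basepoint $o$ and a fixed compatible proper metric $d$; $B(r)$ is the closed ball of radius $r$ about $o$. $A=C_0(X)$. $\mathcal U$ is a nonprincipal ultrafilter on $\mathbb N$, and $A^\mathcal U=\ell^\infty(A)/\{(f_n):\lim_{n,\mathcal U}\|f_n\|=0\}$ is the ultrapower, with $(f_n)^\bullet$ the class of $(f_n)$. A sequence $(f_n)\in\ell^\infty(A)$ is $\mathcal U$-equicontinuous on bounded sets if for every $r,\epsilon>0$ there is $\delta>0$ such that for a set of $n$ belonging to $\mathcal U$, $|f_n(s)-f_n(t)|\le\epsilon$ for all $s,t\in B(r)$ with $d(s,t)<\delta$; $A^{c\mathcal U}$ is the $\mathrm{C}^*$-subalgebra of $A^\mathcal U$ consisting of classes of such sequences. $I:=\{(f_n)^\bullet\in A^\mathcal U:\exists r_n\in\mathbb R \text{ with } \lim_{n,\mathcal U}r_n=+\infty \text{ and } f_n|_{B(r_n)}\equiv 0\text{ for all } n\}$. An ideal $J$ in a $\mathrm{C}^*$-algebra $C$ is essential if $cJ=0$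 implies $c=0$ for $c\in C$. *)

theory Defs
  imports "HOL-Analysis.Analysis"
begin

definition nonprincipal_ultrafilter :: "nat filter \<Rightarrow> bool" where
  "nonprincipal_ultrafilter U \<longleftrightarrow> U \<noteq> bot \<and>
     (\<forall>P. eventually P U \<or> eventually (\<lambda>n. \<not> P n) U) \<and>
     (\<forall>k. eventually (\<lambda>n. n \<noteq> k) U)"

text \<open>A = C_0(X): continuous complex functions vanishing at infinity.\<close>
definition C0 :: "('a::topological_space \<Rightarrow> complex) set" where
  "C0 = {f. continuous_on UNIV f \<and>
           (\<forall>e>0. \<exists>K. compact K \<and> (\<forall>x. x \<notin> K \<longrightarrow> cmod (f x) < e))}"

definition supn :: "('a \<Rightarrow> complex) \<Rightarrow> real" where
  "supn f = (SUP x. cmod (f x))"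

text \<open>Sequences in ell-infinity(A) (representatives of elements of the ultrapower).\<close>
definition linf :: "(nat \<Rightarrow> 'a::topological_space \<Rightarrow> complex) \<Rightarrow> bool" where
  "linf F \<longleftrightarrow> (\<forall>n. F n \<in> C0) \<and> (\<exists>M. \<forall>n. supn (F n) \<le> M)"

definition seq_add :: "(nat \<Rightarrow> 'a \<Rightarrow> complex) \<Rightarrow> (nat \<Rightarrow> 'a \<Rightarrow> complex) \<Rightarrow> nat \<Rightarrow> 'a \<Rightarrow> complex" where
  "seq_add F G = (\<lambda>n x. F n x + G n x)"
definition seq_diff :: "(nat \<Rightarrow> 'a \<Rightarrow> complex) \<Rightarrow> (nat \<Rightarrow> 'a \<Rightarrow> complex) \<Rightarrow> nat \<Rightarrow> 'a \<Rightarrow> complex" where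
  "seq_diff F G = (\<lambda>n x. F n x - G n x)"
definition seq_mult :: "(nat \<Rightarrow> 'a \<Rightarrow> complex) \<Rightarrow> (nat \<Rightarrow> 'a \<Rightarrow> complex) \<Rightarrow> nat \<Rightarrow> 'a \<Rightarrow> complex" where
  "seq_mult F G = (\<lambda>n x. F n x * G n x)"
definition seq_scale :: "complex \<Rightarrow> (nat \<Rightarrow> 'a \<Rightarrow> complex) \<Rightarrow> nat \<Rightarrow> 'a \<Rightarrow> complex" where
  "seq_scale c F = (\<lambda>n x. c * F n x)"
definition seq_zero :: "nat \<Rightarrow> 'a \<Rightarrow> complex" where
  "seq_zero = (\<lambda>n x. 0)"

definition diag :: "('a \<Rightarrow> complex) \<Rightarrow> nat \<Rightarrow> 'a \<Rightarrow> complex" where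
  "diag a = (\<lambda>n. a)"

text \<open>Two representatives define the same class of the ultrapower.\<close>
definition uequiv :: "nat filter \<Rightarrow> (nat \<Rightarrow> 'a \<Rightarrow> complex) \<Rightarrow> (nat \<Rightarrow> 'a \<Rightarrow> complex) \<Rightarrow> bool" where
  "uequiv U F G \<longleftrightarrow> ((\<lambda>n. supn (\<lambda>x. F n x - G n x)) \<longlongrightarrow> 0) U"

definition ueqc :: "nat filter \<Rightarrow> 'a::metric_space \<Rightarrow> (nat \<Rightarrow> 'a \<Rightarrow> complex) \<Rightarrow> bool" where
  "ueqc U x0 F \<longleftrightarrow> (\<forall>r>0. \<forall>e>0. \<exists>d>0. eventually (\<lambda>n. \<forall>s\<in>cball x0 r. \<forall>t\<in>cball x0 r.
        dist s t < d \<longrightarrow> cmod (F n s - F n t) \<le> e) U)"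

text \<open>F represents an element of A^{cU}: its class contains a U-equicontinuous sequence.\<close>
definition in_AcU :: "nat filter \<Rightarrow> 'a::metric_space \<Rightarrow> (nat \<Rightarrow> 'a \<Rightarrow> complex) \<Rightarrow> bool" where
  "in_AcU U x0 F \<longleftrightarrow> linf F \<and> (\<exists>G. linf G \<and> uequiv U F G \<and> ueqc U x0 G)"

text \<open>F represents an element of I: its class contains a sequence vanishing on B(r_n), r_n \<rightarrow> \<infinity> along U.\<close>
definition in_I :: "nat filter \<Rightarrow> 'a::metric_space \<Rightarrow> (nat \<Rightarrow> 'a \<Rightarrow> complex) \<Rightarrow> bool" where
  "in_I U x0 F \<longleftrightarrow> linf F \<and> (\<exists>G. linf G \<and> uequiv U F G \<and>
      (\<exists>r :: nat \<Rightarrow> real. filterlim r at_top U \<and> (\<forall>n. \<forall>x\<in>cball x0 (r n). G n x = 0)))"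

end

theory Submission
  imports Defs "HOL-Analysis.Analysis"
begin

lemma C0_bounded: assumes "f \<in> C0" shows "\<exists>B. \<forall>x. cmod (f x) \<le> B"
proof -
  have c: "continuous_on UNIV f" using assms unfolding C0_def by blast
  have "(1::real) > 0" by simp
  then obtain K where K: "compact K" "\<forall>x. x \<notin> K \<longrightarrow> cmod (f x) < 1"
    using assms unfolding C0_def by blast
  have "compact (f ` K)" using K(1) c by (intro compact_continuous_image continuous_on_subset[OF c]) auto
  then obtain B where B: "\<forall>y\<in>f ` K. norm y \<le> B" using compact_imp_bounded bounded_iff by metis
  have "cmod (f x) \<le> max B 1" for x
  proof (cases "x \<in> K")
    case True thus ?thesis using B by fastforce
  next
    case False thus ?thesis using K(2) by fastforce
  qed
  thus ?thesis by blast
qed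

lemma supn_ge: assumes "\<forall>x. cmod (f x) \<le> B" shows "cmod (f x) \<le> supn f"
  unfolding supn_def by (rule cSUP_upper) (use assms in auto)

lemma supn_le: assumes "\<forall>x. cmod (f x) \<le> B" shows "supn f \<le> B"
  unfolding supn_def by (rule cSUP_least) (use assms in auto)

lemma C0_mult: assumes "f \<in> C0" "continuous_on UNIV g" "\<forall>x. cmod (g x) \<le> M"
  shows "(\<lambda>x. f x * g x) \<in> C0" "(\<lambda>x. g x * f x) \<in> C0"
proof -
  have c: "continuous_on UNIV (\<lambda>x. f x * g x)" using assms unfolding C0_def
    by (auto intro!: continuous_intros)
  have "\<exists>K. compact K \<and> (\<forall>x. x \<notin> K \<longrightarrow> cmod (f x * g x) < e)" if e: "e > 0" for e
  proof -
    have "e / (\<bar>M\<bar>+1) > 0" using e by auto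
    then obtain K where K: "compact K" "\<forall>x. x \<notin> K \<longrightarrow> cmod (f x) < e / (\<bar>M\<bar>+1)"
      using assms(1) unfolding C0_def by blast
    have "cmod (f x * g x) < e" if "x \<notin> K" for x
    proof -
      have "cmod (f x * g x) = cmod (f x) * cmod (g x)" by (simp add: norm_mult)
      also have "\<dots> \<le> cmod (f x) * (\<bar>M\<bar>+1)" using assms(3) by (intro mult_left_mono) (smt (verit) , simp)
      also have "\<dots> < e" using K(2) that by (simp add: pos_less_divide_eq)
      finally show ?thesis .
    qed
    thus ?thesis using K by blast
  qed
  thus "(\<lambda>x. f x * g x) \<in> C0" using c unfolding C0_def by blast
  thus "(\<lambda>x. g x * f x) \<in> C0" by (simp add: mult.commute)
qed

lemma C0_cont: "f \<in> C0 \<Longrightarrow> continuous_on UNIV f" unfolding C0_def by simp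

lemma C0_mult2: assumes "f \<in> C0" "g \<in> C0" shows "(\<lambda>x. f x * g x) \<in> C0"
  using C0_mult(1)[OF assms(1) C0_cont[OF assms(2)]] C0_bounded[OF assms(2)] by blast

lemma C0_add: assumes "f \<in> C0" "g \<in> C0" shows "(\<lambda>x. f x + g x) \<in> C0"
proof -
  have c: "continuous_on UNIV (\<lambda>x. f x + g x)" using assms unfolding C0_def
    by (auto intro!: continuous_intros)
  have "\<exists>K. compact K \<and> (\<forall>x. x \<notin> K \<longrightarrow> cmod (f x + g x) < e)" if e: "e > 0" for e
  proof -
    have e2: "e/2 > 0" using e by simp
    obtain K1 where K1: "compact K1" "\<forall>x. x \<notin> K1 \<longrightarrow> cmod (f x) < e/2"
      using assms(1) e2 unfolding C0_def by blast
    obtain K2 where K2: "compact K2" "\<forall>x. x \<notin> K2 \<longrightarrow> cmod (g x) < e/2"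
      using assms(2) e2 unfolding C0_def by blast
    have "cmod (f x + g x) < e" if "x \<notin> K1 \<union> K2" for x
    proof -
      have "cmod (f x) < e/2" "cmod (g x) < e/2" using K1(2) K2(2) that by auto
      thus ?thesis using norm_triangle_ineq[of "f x" "g x"] by linarith
    qed
    thus ?thesis using K1 K2 compact_Un by blast
  qed
  thus ?thesis using c unfolding C0_def by blast
qed

lemma C0_const_mult: assumes "f \<in> C0" shows "(\<lambda>x. c * f x) \<in> C0"
  using C0_mult(2)[OF assms, of "\<lambda>_. c" "cmod c"] by auto

lemma C0_diff: assumes "f \<in> C0" "g \<in> C0" shows "(\<lambda>x. f x - g x) \<in> C0"
  using C0_add[OF assms(1) C0_const_mult[OF assms(2), of "-1"]] by simp

lemma C0_zero: "(\<lambda>x. 0) \<in> C0" unfolding C0_def by auto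

definition cut :: "'a::metric_space \<Rightarrow> real \<Rightarrow> 'a \<Rightarrow> complex" where
  "cut x0 R x = complex_of_real (max 0 (min 1 (R - dist x0 x)))"

lemma cut_cont: "continuous_on UNIV (cut x0 R)"
  unfolding cut_def by (intro continuous_intros)

lemma cut_bound: "cmod (cut x0 R x) \<le> 1" unfolding cut_def by auto

lemma cut_one: "dist x0 x \<le> R - 1 \<Longrightarrow> cut x0 R x = 1" unfolding cut_def by auto
lemma cut_zero: "\<not> dist x0 x < R \<Longrightarrow> cut x0 R x = 0" unfolding cut_def by auto

lemma cut_C0: assumes "compact (cball x0 R)" shows "cut x0 R \<in> C0"
  unfolding C0_def using cut_cont
  by (auto intro!: exI[of _ "cball x0 R"] simp: assms cut_zero)


definition Zp :: "nat filter \<Rightarrow> 'a::metric_space \<Rightarrow> (nat \<Rightarrow> 'a \<Rightarrow> complex) \<Rightarrow> bool" where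
  "Zp U x0 F \<longleftrightarrow> (\<forall>r e. e > 0 \<longrightarrow> eventually (\<lambda>n. \<forall>x\<in>cball x0 r. cmod (F n x) \<le> e) U)"

lemma linf_iff: "linf F \<longleftrightarrow> (\<forall>n. F n \<in> C0) \<and> (\<exists>M. \<forall>n x. cmod (F n x) \<le> M)"
proof
  assume a: "linf F"
  then obtain M where M: "\<forall>n. supn (F n) \<le> M" and c: "\<forall>n. F n \<in> C0" unfolding linf_def by blast
  have "cmod (F n x) \<le> M" for n x
  proof -
    obtain B where "\<forall>x. cmod (F n x) \<le> B" using C0_bounded c by blast
    hence "cmod (F n x) \<le> supn (F n)" by (rule supn_ge)
    thus ?thesis using M by (meson order_trans)
  qed
  thus "(\<forall>n. F n \<in> C0) \<and> (\<exists>M. \<forall>n x. cmod (F n x) \<le> M)" using c by blast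
next
  assume "(\<forall>n. F n \<in> C0) \<and> (\<exists>M. \<forall>n x. cmod (F n x) \<le> M)"
  thus "linf F" unfolding linf_def using supn_le by metis
qed

lemma np_bot: "nonprincipal_ultrafilter U \<Longrightarrow> U \<noteq> bot"
  unfolding nonprincipal_ultrafilter_def by simp

lemma np_ge: assumes "nonprincipal_ultrafilter U" shows "eventually (\<lambda>n. k \<le> n) U"
proof -
  have "eventually (\<lambda>n. \<forall>j\<in>{..<k}. n \<noteq> j) U"
    using assms unfolding nonprincipal_ultrafilter_def by (intro eventually_ball_finite) auto
  thus ?thesis by (rule eventually_mono) (metis lessThan_iff not_le order_refl)
qed

lemma uequiv_ev: assumes "uequiv U F G" "e > 0"
  shows "eventually (\<lambda>n. supn (\<lambda>x. F n x - G n x) < e) U"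
proof -
  have "eventually (\<lambda>n. dist (supn (\<lambda>x. F n x - G n x)) 0 < e) U"
    using assms unfolding uequiv_def tendsto_iff by blast
  thus ?thesis by (rule eventually_mono) auto
qed

lemma linf_diff_bound: assumes "linf F" "linf G"
  shows "cmod (F n x - G n x) \<le> supn (\<lambda>x. F n x - G n x)"
proof -
  have "(\<lambda>x. F n x - G n x) \<in> C0" using assms C0_diff unfolding linf_def by blast
  then obtain B where "\<forall>x. cmod (F n x - G n x) \<le> B" using C0_bounded by blast
  thus ?thesis by (rule supn_ge)
qed

lemma in_I_imp: assumes "in_I U x0 F" shows "linf F" "Zp U x0 F"
proof -
  show lF: "linf F" using assms unfolding in_I_def by blast
  obtain G r where G: "linf G" "uequiv U F G" "filterlim r at_top U"
      "\<forall>n. \<forall>x\<in>cball x0 (r n). G n x = 0"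
    using assms unfolding in_I_def by blast
  show "Zp U x0 F" unfolding Zp_def
  proof (intro allI impI)
    fix r0 e :: real assume e: "e > 0"
    have "eventually (\<lambda>n. r0 \<le> r n) U" using G(3) filterlim_at_top by blast
    moreover have "eventually (\<lambda>n. supn (\<lambda>x. F n x - G n x) < e) U" using uequiv_ev G(2) e by blast
    ultimately show "eventually (\<lambda>n. \<forall>x\<in>cball x0 r0. cmod (F n x) \<le> e) U"
    proof eventually_elim
      case (elim n)
      show ?case
      proof
        fix x assume x: "x \<in> cball x0 r0"
        hence "G n x = 0" using G(4) elim(1) by auto
        hence "cmod (F n x) = cmod (F n x - G n x)" by simp
        also have "\<dots> \<le> supn (\<lambda>x. F n x - G n x)" using linf_diff_bound lF G(1) by blast
        finally show "cmod (F n x) \<le> e" using elim(2) by simp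
      qed
    qed
  qed
qed


lemma cut_compl_bound: "cmod (1 - cut x0 R x) \<le> 1"
proof -
  have "1 - cut x0 R x = complex_of_real (1 - max 0 (min 1 (R - dist x0 x)))" unfolding cut_def by simp
  thus ?thesis by (simp only: norm_of_real)
qed

lemma supn_nonneg: assumes "\<forall>x. cmod (f x) \<le> B" shows "0 \<le> supn f"
  using supn_ge[OF assms, of undefined] norm_ge_zero order_trans by blast

lemma Zp_imp_in_I:
  assumes U: "nonprincipal_ultrafilter U" and proper: "\<forall>r. compact (cball x0 r)"
    and F: "linf F" and Z: "Zp U x0 F"
  shows "in_I U x0 F"
proof -
  define A where "A j = {n. \<forall>x\<in>cball x0 (real j). cmod (F n x) \<le> 1/(real j+1)}" for j
  define B where "B k = {n. k \<le> n \<and> (\<forall>j\<le>k. n \<in> A j)}" for k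
  have evB: "eventually (\<lambda>n. n \<in> B k) U" for k
  proof -
    have "eventually (\<lambda>n. n \<in> A j) U" for j
    proof -
      have "(1/(real j+1)) > 0" by simp
      thus ?thesis using Z unfolding Zp_def A_def by simp
    qed
    hence "eventually (\<lambda>n. \<forall>j\<in>{..k}. n \<in> A j) U"
      by (intro eventually_ball_finite) auto
    moreover have "eventually (\<lambda>n. k \<le> n) U" by (rule np_ge[OF U])
    ultimately show ?thesis by eventually_elim (auto simp: B_def)
  qed
  define \<kappa> where "\<kappa> n = (if n \<in> B 0 then Greatest (\<lambda>k. n \<in> B k) else 0)" for n
  have Bb: "n \<in> B k \<Longrightarrow> k \<le> n" for n k by (simp add: B_def)
  have B0: "n \<in> B k \<Longrightarrow> n \<in> B 0" for n k by (auto simp: B_def)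
  have \<kappa>ge: "n \<in> B k \<Longrightarrow> k \<le> \<kappa> n" for n k
    using Greatest_le_nat[of "\<lambda>k. n \<in> B k" k n] Bb B0 by (auto simp: \<kappa>_def)
  have \<kappa>B: "n \<in> B 0 \<Longrightarrow> n \<in> B (\<kappa> n)" for n
    using GreatestI_nat[of "\<lambda>k. n \<in> B k" 0 n] Bb by (auto simp: \<kappa>_def)
  have \<kappa>A: "n \<in> B 0 \<Longrightarrow> x \<in> cball x0 (real (\<kappa> n)) \<Longrightarrow> cmod (F n x) \<le> 1/(real (\<kappa> n)+1)" for n x
    using \<kappa>B[of n] by (auto simp: B_def A_def)
  define G where "G n x = F n x * (1 - cut x0 (real (\<kappa> n)) x)" for n x
  define r where "r n = real (\<kappa> n) - 1" for n
  have G0: "\<forall>n. \<forall>x\<in>cball x0 (r n). G n x = 0" by (auto simp: G_def r_def cut_one)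
  obtain M where M: "\<forall>n x. cmod (F n x) \<le> M" and FC: "\<forall>n. F n \<in> C0" using F linf_iff by blast
  have lG: "linf G" unfolding linf_iff
  proof (intro conjI allI exI)
    fix n
    show "G n \<in> C0" unfolding G_def
      by (rule C0_mult(1)[OF FC[rule_format] _ , of _ 1])
         (auto intro!: continuous_intros cut_cont simp: cut_compl_bound)
  next
    fix n x
    have "cmod (G n x) = cmod (F n x) * cmod (1 - cut x0 (real (\<kappa> n)) x)" by (simp add: G_def norm_mult)
    also have "\<dots> \<le> cmod (F n x) * 1" by (intro mult_left_mono cut_compl_bound) auto
    finally show "cmod (G n x) \<le> M" using M by (smt (verit))
  qed
  have diffb: "supn (\<lambda>x. F n x - G n x) \<le> 1/(real(\<kappa> n)+1)" for n
  proof (rule supn_le, rule allI)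
    fix x
    have eq: "F n x - G n x = F n x * cut x0 (real (\<kappa> n)) x" by (simp add: G_def algebra_simps)
    show "cmod (F n x - G n x) \<le> 1/(real(\<kappa> n)+1)"
    proof (cases "dist x0 x < real (\<kappa> n)")
      case False thus ?thesis by (simp add: eq cut_zero)
    next
      case True
      hence "n \<in> B 0" by (cases "n \<in> B 0") (auto simp: \<kappa>_def)
      hence a: "cmod (F n x) \<le> 1/(real (\<kappa> n)+1)" using \<kappa>A True by simp
      have "cmod (F n x - G n x) = cmod (F n x) * cmod (cut x0 (real (\<kappa> n)) x)" by (simp add: eq norm_mult)
      also have "\<dots> \<le> cmod (F n x) * 1" by (intro mult_left_mono cut_bound) auto
      finally show ?thesis using a by simp
    qed
  qed
  have ue: "uequiv U F G" unfolding uequiv_def tendsto_iff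
  proof (intro allI impI)
    fix e :: real assume e: "e > 0"
    obtain k where k: "inverse (real (Suc k)) < e" using reals_Archimedean e by blast
    show "eventually (\<lambda>n. dist (supn (\<lambda>x. F n x - G n x)) 0 < e) U"
      using evB[of k]
    proof eventually_elim
      case (elim n)
      have "k \<le> \<kappa> n" using \<kappa>ge elim by blast
      hence "1/(real(\<kappa> n)+1) \<le> inverse (real (Suc k))" by (simp add: field_simps)
      hence le: "supn (\<lambda>x. F n x - G n x) < e" using diffb[of n] k by linarith
      have "0 \<le> supn (\<lambda>x. F n x - G n x)"
        using linf_diff_bound[OF F lG, of n x0] norm_ge_zero order_trans by blast
      thus ?case using le by simp
    qed
  qed
  have fr: "filterlim r at_top U" unfolding filterlim_at_top
  proof
    fix Zr :: real
    obtain k :: nat where k: "Zr + 1 \<le> real k" using real_arch_simple by blast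
    show "eventually (\<lambda>n. Zr \<le> r n) U" using evB[of k]
    proof eventually_elim
      case (elim n) thus ?case using \<kappa>ge[OF elim] k by (simp add: r_def)
    qed
  qed
  show ?thesis unfolding in_I_def using F lG ue fr G0 by blast
qed

lemma in_I_iff: assumes U: "nonprincipal_ultrafilter U" and proper: "\<forall>r. compact (cball x0 r)"
  shows "in_I U x0 F \<longleftrightarrow> linf F \<and> Zp U x0 F"
  using in_I_imp Zp_imp_in_I[OF U proper] by blast


lemma ulim_exists: assumes U: "nonprincipal_ultrafilter U" and b: "\<forall>n. cmod (h n) \<le> M"
  shows "\<exists>l. (h \<longlongrightarrow> l) U"
proof -
  let ?F = "filtermap h U"
  have nb: "?F \<noteq> bot" using np_bot[OF U] by (simp add: filtermap_bot_iff)
  have ev: "eventually (\<lambda>x. x \<in> cball 0 M) ?F" using b by (simp add: eventually_filtermap)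
  have cc: "compact (cball (0::complex) M)" by (rule compact_cball)
  obtain l where l: "inf (nhds l) ?F \<noteq> bot"
    using cc[unfolded compact_filter, rule_format, OF nb ev] by blast
  have "(h \<longlongrightarrow> l) U" unfolding tendsto_def
  proof (intro allI impI)
    fix S assume S: "open S" "l \<in> S"
    show "eventually (\<lambda>n. h n \<in> S) U"
    proof (rule ccontr)
      assume a: "\<not> eventually (\<lambda>n. h n \<in> S) U"
      have "eventually (\<lambda>n. h n \<in> S) U \<or> eventually (\<lambda>n. \<not> h n \<in> S) U"
        using U unfolding nonprincipal_ultrafilter_def by (elim conjE) (erule allE[of _ "\<lambda>n. h n \<in> S"])
      hence "eventually (\<lambda>n. \<not> h n \<in> S) U" using a by simp
      hence e1: "eventually (\<lambda>x. x \<notin> S) ?F" by (simp add: eventually_filtermap)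
      have e2: "eventually (\<lambda>x. x \<in> S) (nhds l)" using S by (rule eventually_nhds_in_open)
      have "eventually (\<lambda>x. False) (inf (nhds l) ?F)"
        unfolding eventually_inf by (rule exI[of _ "\<lambda>x. x \<in> S"], rule exI[of _ "\<lambda>x. x \<notin> S"]) (use e1 e2 in simp)
      thus False using l by (simp add: eventually_False)
    qed
  qed
  thus ?thesis by blast
qed

lemma lim_le: assumes U: "nonprincipal_ultrafilter U" and t: "(h \<longlongrightarrow> l) U"
  and ev: "eventually (\<lambda>n. cmod (h n) \<le> e) U" shows "cmod l \<le> e"
proof -
  have "\<not> trivial_limit U" using np_bot[OF U] by (simp add: trivial_limit_def)
  thus ?thesis using tendsto_upperbound[OF tendsto_norm[OF t] ev] by simp
qed

locale ulimit =
  fixes U :: "nat filter" and x0 :: "'a::metric_space" and G :: "nat \<Rightarrow> 'a \<Rightarrow> complex" and M :: real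
  assumes U: "nonprincipal_ultrafilter U" and proper: "\<forall>r. compact (cball x0 r)"
    and GC: "\<forall>n. G n \<in> C0" and GM: "\<forall>n x. cmod (G n x) \<le> M" and eq: "ueqc U x0 G"
begin

definition g where "g x = (SOME l. ((\<lambda>n. G n x) \<longlongrightarrow> l) U)"

lemma gl: "((\<lambda>n. G n x) \<longlongrightarrow> g x) U"
proof -
  have "\<forall>n. cmod (G n x) \<le> M" using GM by blast
  then obtain l where "((\<lambda>n. G n x) \<longlongrightarrow> l) U" using ulim_exists[OF U, of "\<lambda>n. G n x" M] by blast
  thus ?thesis unfolding g_def by (rule someI)
qed

lemma gb: "cmod (g x) \<le> M"
  by (rule lim_le[OF U gl]) (use GM in simp)

lemma gdiff: assumes "eventually (\<lambda>n. cmod (G n s - G n t) \<le> e) U"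
  shows "cmod (g s - g t) \<le> e"
  using lim_le[OF U tendsto_diff[OF gl gl] assms] .

lemma gcont: "continuous_on UNIV g"
proof -
  have "continuous (at x) g" for x
    unfolding continuous_at_eps_delta
  proof (intro allI impI)
    fix e :: real assume e: "e > 0"
    define R where "R = dist x0 x + 1"
    have R: "R > 0" unfolding R_def by (simp add: add_nonneg_pos)
    have e2: "e/2 > 0" using e by simp
    obtain d where d: "d > 0" "eventually (\<lambda>n. \<forall>s\<in>cball x0 R. \<forall>t\<in>cball x0 R.
        dist s t < d \<longrightarrow> cmod (G n s - G n t) \<le> e/2) U"
      using eq[unfolded ueqc_def, rule_format, OF R e2] by blast
    show "\<exists>d>0. \<forall>x'. dist x' x < d \<longrightarrow> dist (g x') (g x) < e"
    proof (intro exI[of _ "min d 1"] conjI allI impI)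
      show "min d 1 > 0" using d by simp
      fix x' assume x': "dist x' x < min d 1"
      have "dist x0 x' \<le> dist x0 x + dist x' x" using dist_triangle2[of x0 x' x] by simp
      hence x'c: "x' \<in> cball x0 R" using x' unfolding R_def by simp
      have xc: "x \<in> cball x0 R" unfolding R_def by simp
      have dd: "dist x' x < d" using x' by simp
      have "eventually (\<lambda>n. cmod (G n x' - G n x) \<le> e/2) U"
        using d(2) by (rule eventually_mono) (use x'c xc dd in blast)
      hence "cmod (g x' - g x) \<le> e/2" by (rule gdiff)
      thus "dist (g x') (g x) < e" using e by (simp add: dist_norm)
    qed
  qed
  thus ?thesis by (simp add: continuous_on_eq_continuous_at)
qed

lemma unif: assumes e: "e > 0"
  shows "eventually (\<lambda>n. \<forall>x\<in>cball x0 r. cmod (G n x - g x) \<le> e) U"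
proof -
  obtain d where d: "d > 0" "eventually (\<lambda>n. \<forall>s\<in>cball x0 r. \<forall>t\<in>cball x0 r.
        dist s t < d \<longrightarrow> cmod (G n s - G n t) \<le> e/3) U"
  proof (cases "r > 0")
    case True
    have "e/3 > 0" using e by simp
    thus ?thesis using eq[unfolded ueqc_def, rule_format, of r "e/3"] True that by blast
  next
    case False
    have "eventually (\<lambda>n. \<forall>s\<in>cball x0 r. \<forall>t\<in>cball x0 r.
        dist s t < 1 \<longrightarrow> cmod (G n s - G n t) \<le> e/3) U"
    proof (rule always_eventually, intro allI ballI impI)
      fix n s t assume "s \<in> cball x0 r" "t \<in> cball x0 r"
      hence "dist x0 s \<le> r" "dist x0 t \<le> r" by auto
      hence "dist x0 s \<le> 0" "dist x0 t \<le> 0" using False by linarith+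
      hence "s = x0" "t = x0" using zero_le_dist[of x0 s] zero_le_dist[of x0 t] by (metis antisym dist_eq_0_iff)+
      thus "cmod (G n s - G n t) \<le> e/3" using e by simp
    qed
    thus ?thesis using that[of 1] by simp
  qed
  obtain T where T: "T \<subseteq> cball x0 r" "finite T" "cball x0 r \<subseteq> (\<Union>y\<in>T. ball y d)"
  proof -
    have "cball x0 r \<subseteq> (\<Union>y\<in>cball x0 r. ball y d)" using d(1) by force
    thus ?thesis using compactE_image[OF proper[rule_format, of r], of "cball x0 r" "\<lambda>y. ball y d"] that
      by blast
  qed
  have "eventually (\<lambda>n. \<forall>y\<in>T. cmod (G n y - g y) \<le> e/3) U"
  proof (rule eventually_ball_finite[OF T(2)], rule ballI)
    fix y
    have "eventually (\<lambda>n. dist (G n y) (g y) < e/3) U" using gl[of y] e tendsto_iff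
      by (metis divide_pos_pos zero_less_numeral)
    thus "eventually (\<lambda>n. cmod (G n y - g y) \<le> e/3) U" by (rule eventually_mono) (simp add: dist_norm)
  qed
  moreover note d(2)
  ultimately show ?thesis
  proof eventually_elim
    case (elim n)
    show ?case
    proof
      fix x assume x: "x \<in> cball x0 r"
      then obtain y where y: "y \<in> T" "dist y x < d" using T(3) by auto
      have yc: "y \<in> cball x0 r" using y T(1) by auto
      have 1: "cmod (G n x - G n y) \<le> e/3" using elim(2) x yc y(2) by (simp add: dist_commute)
      have 2: "cmod (G n y - g y) \<le> e/3" using elim(1) y by simp
      have "eventually (\<lambda>n. cmod (G n y - G n x) \<le> e/3) U"
        using d(2) by (rule eventually_mono) (use x yc y(2) in auto)
      hence 3: "cmod (g y - g x) \<le> e/3" by (rule gdiff)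
      have "G n x - g x = (G n x - G n y) + (G n y - g y) + (g y - g x)" by simp
      hence "cmod (G n x - g x) \<le> cmod (G n x - G n y) + cmod (G n y - g y) + cmod (g y - g x)"
        by (metis norm_triangle_ineq order_trans add_right_mono)
      thus "cmod (G n x - g x) \<le> e" using 1 2 3 by linarith
    qed
  qed
qed

end


lemma linf_add: "linf F \<Longrightarrow> linf G \<Longrightarrow> linf (seq_add F G)"
  unfolding linf_iff seq_add_def
proof (elim conjE exE, intro conjI allI exI)
  fix M1 M2 n x assume a: "\<forall>n. F n \<in> C0" "\<forall>n x. cmod (F n x) \<le> M1" "\<forall>n. G n \<in> C0" "\<forall>n x. cmod (G n x) \<le> M2"
  show "(\<lambda>x. F n x + G n x) \<in> C0" using a C0_add by blast
  have "cmod (F n x) \<le> M1" "cmod (G n x) \<le> M2" using a by auto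
  thus "cmod (F n x + G n x) \<le> M1 + M2" using norm_triangle_ineq[of "F n x" "G n x"] by linarith
qed

lemma linf_mult: "linf F \<Longrightarrow> linf G \<Longrightarrow> linf (seq_mult F G)"
  unfolding linf_iff seq_mult_def
proof (elim conjE exE, intro conjI allI exI)
  fix M1 M2 n x assume a: "\<forall>n. F n \<in> C0" "\<forall>n x. cmod (F n x) \<le> M1" "\<forall>n. G n \<in> C0" "\<forall>n x. cmod (G n x) \<le> M2"
  show "(\<lambda>x. F n x * G n x) \<in> C0" using a C0_mult2 by blast
  have "cmod (F n x * G n x) = cmod (F n x) * cmod (G n x)" by (simp add: norm_mult)
  also have "\<dots> \<le> M1 * M2" using a by (intro mult_mono) (auto intro: order_trans[OF norm_ge_zero])
  finally show "cmod (F n x * G n x) \<le> M1 * M2" .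
qed

lemma linf_diag: "a \<in> C0 \<Longrightarrow> linf (diag a)"
  unfolding linf_iff diag_def using C0_bounded by blast

lemma linf_const: "linf (\<lambda>n x. c) \<Longrightarrow> True" by simp

lemma linf_scale: "linf F \<Longrightarrow> linf (seq_scale c F)"
  unfolding linf_iff seq_scale_def
proof (elim conjE exE, intro conjI allI exI)
  fix M n x assume a: "\<forall>n. F n \<in> C0" "\<forall>n x. cmod (F n x) \<le> M"
  show "(\<lambda>x. c * F n x) \<in> C0" using a C0_const_mult by blast
  show "cmod (c * F n x) \<le> cmod c * M" using a by (simp add: norm_mult mult_left_mono)
qed

lemma linf_diff: "linf F \<Longrightarrow> linf G \<Longrightarrow> linf (seq_diff F G)"
proof -
  assume "linf F" "linf G"
  hence "linf (seq_add F (seq_scale (-1) G))" using linf_add linf_scale by blast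
  moreover have "seq_add F (seq_scale (-1) G) = seq_diff F G"
    by (simp add: seq_add_def seq_scale_def seq_diff_def fun_eq_iff)
  ultimately show ?thesis by simp
qed

lemma linf_zero: "linf seq_zero"
  unfolding linf_iff seq_zero_def using C0_zero by auto

lemma Zp_add: assumes "Zp U x0 F" "Zp U x0 G" shows "Zp U x0 (seq_add F G)"
  unfolding Zp_def seq_add_def
proof (intro allI impI)
  fix r e :: real assume e: "e > 0"
  have e2: "e/2 > 0" using e by simp
  have "eventually (\<lambda>n. \<forall>x\<in>cball x0 r. cmod (F n x) \<le> e/2) U"
       "eventually (\<lambda>n. \<forall>x\<in>cball x0 r. cmod (G n x) \<le> e/2) U"
    using assms e2 unfolding Zp_def by blast+
  thus "eventually (\<lambda>n. \<forall>x\<in>cball x0 r. cmod (F n x + G n x) \<le> e) U"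
  proof eventually_elim
    case (elim n)
    show ?case
    proof
      fix x assume "x \<in> cball x0 r"
      hence "cmod (F n x) \<le> e/2" "cmod (G n x) \<le> e/2" using elim by auto
      thus "cmod (F n x + G n x) \<le> e" using norm_triangle_ineq[of "F n x" "G n x"] by linarith
    qed
  qed
qed

lemma Zp_mult: assumes "Zp U x0 G" "\<forall>n x. cmod (F n x) \<le> M"
  shows "Zp U x0 (seq_mult F G)" "Zp U x0 (seq_mult G F)"
proof -
  have *: "Zp U x0 (seq_mult F G)"
    unfolding Zp_def seq_mult_def
  proof (intro allI impI)
    fix r e :: real assume e: "e > 0"
    have e2: "e/(\<bar>M\<bar>+1) > 0" using e by simp
    have "eventually (\<lambda>n. \<forall>x\<in>cball x0 r. cmod (G n x) \<le> e/(\<bar>M\<bar>+1)) U"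
      using assms(1) e2 unfolding Zp_def by blast
    thus "eventually (\<lambda>n. \<forall>x\<in>cball x0 r. cmod (F n x * G n x) \<le> e) U"
    proof (rule eventually_mono, intro ballI)
      fix n x assume h: "\<forall>x\<in>cball x0 r. cmod (G n x) \<le> e/(\<bar>M\<bar>+1)" and x: "x \<in> cball x0 r"
      have "cmod (F n x * G n x) = cmod (F n x) * cmod (G n x)" by (simp add: norm_mult)
      also have "\<dots> \<le> (\<bar>M\<bar>+1) * (e/(\<bar>M\<bar>+1))"
      proof (rule mult_mono)
        have "cmod (F n x) \<le> M" using assms(2) by blast
        thus "cmod (F n x) \<le> \<bar>M\<bar>+1" by linarith
        show "cmod (G n x) \<le> e/(\<bar>M\<bar>+1)" using h x by blast
      qed auto
      also have "\<dots> = e" by simp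
      finally show "cmod (F n x * G n x) \<le> e" .
    qed
  qed
  show "Zp U x0 (seq_mult F G)" by (rule *)
  have "seq_mult G F = seq_mult F G" by (simp add: seq_mult_def fun_eq_iff mult.commute)
  thus "Zp U x0 (seq_mult G F)" using * by simp
qed

lemma Zp_scale: assumes "Zp U x0 F" shows "Zp U x0 (seq_scale c F)"
proof -
  have "seq_scale c F = seq_mult (\<lambda>n x. c) F" by (simp add: seq_scale_def seq_mult_def)
  thus ?thesis using Zp_mult(1)[OF assms, of "\<lambda>n x. c" "cmod c"] by simp
qed

lemma clamp_lip: "\<bar>max 0 (min 1 (R - a)) - max 0 (min 1 (R - b))\<bar> \<le> \<bar>a - (b::real)\<bar>"
  by (cases "R - a \<le> 0"; cases "R - a \<le> 1"; cases "R - b \<le> 0"; cases "R - b \<le> 1") (simp_all add: abs_if)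

lemma cut_lip: "cmod (cut x0 R s - cut x0 R t) \<le> dist s t"
proof -
  have a: "\<bar>dist x0 s - dist x0 t\<bar> \<le> dist s t"
    using dist_triangle2[of x0 s t] dist_triangle2[of x0 t s] by (simp add: dist_commute abs_le_iff)
  have "cut x0 R s - cut x0 R t = complex_of_real (max 0 (min 1 (R - dist x0 s)) - max 0 (min 1 (R - dist x0 t)))"
    by (simp add: cut_def)
  hence "cmod (cut x0 R s - cut x0 R t) = \<bar>max 0 (min 1 (R - dist x0 s)) - max 0 (min 1 (R - dist x0 t))\<bar>"
    by (simp only: norm_of_real)
  also have "\<dots> \<le> \<bar>dist x0 s - dist x0 t\<bar>" by (rule clamp_lip)
  finally show ?thesis using a by linarith
qed

lemma supn_zero: "supn (\<lambda>x. 0) = 0" by (simp add: supn_def)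

lemma uequiv_refl: "uequiv U F F" by (simp add: uequiv_def supn_zero)


context
  fixes U :: "nat filter" and x0 :: "'a::metric_space"
  assumes U: "nonprincipal_ultrafilter U" and proper: "\<forall>r. compact (cball x0 r)"
begin

lemma I_iff: "in_I U x0 F \<longleftrightarrow> linf F \<and> Zp U x0 F"
  by (rule in_I_iff[OF U proper])

lemma p_zero: "in_I U x0 (seq_zero :: nat \<Rightarrow> 'a \<Rightarrow> complex)"
  unfolding I_iff using linf_zero by (auto simp: Zp_def seq_zero_def)

lemma p_add: "in_I U x0 F \<Longrightarrow> in_I U x0 G \<Longrightarrow> in_I U x0 (seq_add F G)"
  unfolding I_iff using linf_add Zp_add by blast

lemma p_scale: "in_I U x0 F \<Longrightarrow> in_I U x0 (seq_scale c F)"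
  unfolding I_iff using linf_scale Zp_scale by blast

lemma p_mult: "linf F \<Longrightarrow> in_I U x0 G \<Longrightarrow> in_I U x0 (seq_mult F G) \<and> in_I U x0 (seq_mult G F)"
  unfolding I_iff using linf_mult Zp_mult by (metis linf_iff)

lemma p_closed:
  assumes F: "linf F" and h: "\<forall>e>0. \<exists>G. in_I U x0 G \<and> eventually (\<lambda>n. supn (\<lambda>x. F n x - G n x) < e) U"
  shows "in_I U x0 F"
  unfolding I_iff
proof (intro conjI F, unfold Zp_def, intro allI impI)
  fix r e :: real assume e: "e > 0"
  have e2: "e/2 > 0" using e by simp
  obtain G where G: "in_I U x0 G" "eventually (\<lambda>n. supn (\<lambda>x. F n x - G n x) < e/2) U"
    using h e2 by blast
  have lG: "linf G" and ZG: "Zp U x0 G" using G(1) I_iff by auto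
  have "eventually (\<lambda>n. \<forall>x\<in>cball x0 r. cmod (G n x) \<le> e/2) U" using ZG e2 unfolding Zp_def by blast
  with G(2) show "eventually (\<lambda>n. \<forall>x\<in>cball x0 r. cmod (F n x) \<le> e) U"
  proof eventually_elim
    case (elim n)
    show ?case
    proof
      fix x assume x: "x \<in> cball x0 r"
      have "cmod (F n x - G n x) \<le> supn (\<lambda>x. F n x - G n x)" by (rule linf_diff_bound[OF F lG])
      moreover have "cmod (G n x) \<le> e/2" using elim x by blast
      moreover have "cmod (F n x) \<le> cmod (F n x - G n x) + cmod (G n x)"
        using norm_triangle_ineq[of "F n x - G n x" "G n x"] by simp
      ultimately show "cmod (F n x) \<le> e" using elim(1) by linarith
    qed
  qed
qed

lemma p_IAcU: assumes "in_I U x0 F" shows "in_AcU U x0 F"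
proof -
  obtain G r where G: "linf F" "linf G" "uequiv U F G" "filterlim r at_top U"
      "\<forall>n. \<forall>x\<in>cball x0 (r n). G n x = 0"
    using assms unfolding in_I_def by blast
  have "ueqc U x0 G" unfolding ueqc_def
  proof (intro allI impI exI[of _ 1] conjI)
    fix R e :: real assume e: "e > 0"
    have "eventually (\<lambda>n. R \<le> r n) U" using G(4) filterlim_at_top by blast
    thus "eventually (\<lambda>n. \<forall>s\<in>cball x0 R. \<forall>t\<in>cball x0 R. dist s t < 1 \<longrightarrow> cmod (G n s - G n t) \<le> e) U"
    proof eventually_elim
      case (elim n)
      have sub: "cball x0 R \<subseteq> cball x0 (r n)" using elim by auto
      show ?case
      proof (intro ballI impI)
        fix s t assume "s \<in> cball x0 R" "t \<in> cball x0 R"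
        hence "G n s = 0" "G n t = 0" using G(5) sub by blast+
        thus "cmod (G n s - G n t) \<le> e" using e by simp
      qed
    qed
  qed simp
  thus ?thesis unfolding in_AcU_def using G by blast
qed

definition E :: "nat \<Rightarrow> 'a \<Rightarrow> complex" where "E n = cut x0 (real n + 1)"

lemma E_AcU: "in_AcU U x0 E"
proof -
  have lE: "linf E" unfolding linf_iff E_def using cut_C0 proper cut_bound by blast
  have "ueqc U x0 E" unfolding ueqc_def
  proof (intro allI impI)
    fix r e :: real assume "r > 0" "e > 0"
    show "\<exists>d>0. eventually (\<lambda>n. \<forall>s\<in>cball x0 r. \<forall>t\<in>cball x0 r. dist s t < d \<longrightarrow> cmod (E n s - E n t) \<le> e) U"
    proof (intro exI[of _ e] conjI always_eventually allI ballI impI)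
      show "e > 0" by fact
      fix n and s t :: 'a assume "dist s t < e"
      thus "cmod (E n s - E n t) \<le> e" using cut_lip[of x0 "real n + 1" s t] unfolding E_def by linarith
    qed
  qed
  thus ?thesis unfolding in_AcU_def using lE uequiv_refl by blast
qed

lemma E_unit: assumes "in_AcU U x0 F"
  shows "in_I U x0 (seq_diff (seq_mult E F) F) \<and> in_I U x0 (seq_diff (seq_mult F E) F)"
proof -
  have lF: "linf F" using assms unfolding in_AcU_def by blast
  have lE: "linf E" using E_AcU unfolding in_AcU_def by blast
  have Z: "Zp U x0 (seq_diff (seq_mult E F) F)" unfolding Zp_def
  proof (intro allI impI)
    fix r e :: real assume e: "e > 0"
    obtain k :: nat where k: "r \<le> real k" using real_arch_simple by blast
    show "eventually (\<lambda>n. \<forall>x\<in>cball x0 r. cmod (seq_diff (seq_mult E F) F n x) \<le> e) U"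
      using np_ge[OF U, of k]
    proof eventually_elim
      case (elim n)
      show ?case
      proof
        fix x assume "x \<in> cball x0 r"
        hence "dist x0 x \<le> (real n + 1) - 1" using k elim by auto
        hence "E n x = 1" unfolding E_def by (rule cut_one)
        thus "cmod (seq_diff (seq_mult E F) F n x) \<le> e" using e by (simp add: seq_diff_def seq_mult_def)
      qed
    qed
  qed
  have eq: "seq_mult F E = seq_mult E F" by (simp add: seq_mult_def fun_eq_iff mult.commute)
  have "in_I U x0 (seq_diff (seq_mult E F) F)" unfolding I_iff using Z linf_diff linf_mult lE lF by blast
  thus ?thesis using eq by simp
qed

lemma diag_AcU: assumes a: "a \<in> C0" shows "in_AcU U x0 (diag a)"
proof -
  have "ueqc U x0 (diag a)" unfolding ueqc_def
  proof (intro allI impI)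
    fix r e :: real assume "r > 0" and e: "e > 0"
    have "uniformly_continuous_on (cball x0 r) a"
      by (rule compact_uniformly_continuous) (use a proper C0_cont continuous_on_subset in blast)+
    then obtain d where d: "d > 0" "\<forall>x\<in>cball x0 r. \<forall>x'\<in>cball x0 r. dist x' x < d \<longrightarrow> dist (a x') (a x) < e"
      unfolding uniformly_continuous_on_def using e by blast
    show "\<exists>d>0. eventually (\<lambda>n. \<forall>s\<in>cball x0 r. \<forall>t\<in>cball x0 r. dist s t < d \<longrightarrow> cmod (diag a n s - diag a n t) \<le> e) U"
    proof (intro exI[of _ d] conjI always_eventually allI ballI impI)
      show "d > 0" by fact
      fix n s t assume "s \<in> cball x0 r" "t \<in> cball x0 r" "dist s t < d"
      thus "cmod (diag a n s - diag a n t) \<le> e" using d(2) by (auto simp: diag_def dist_norm less_imp_le)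
    qed
  qed
  thus ?thesis unfolding in_AcU_def using linf_diag[OF a] uequiv_refl by blast
qed

lemma diag_inj: assumes "a \<in> C0" "b \<in> C0" "in_I U x0 (seq_diff (diag a) (diag b))" shows "a = b"
proof
  fix x
  have Z: "Zp U x0 (seq_diff (diag a) (diag b))" using assms(3) I_iff by blast
  have "cmod (a x - b x) \<le> e" if e: "e > 0" for e
  proof -
    have "eventually (\<lambda>n. \<forall>y\<in>cball x0 (dist x0 x). cmod (seq_diff (diag a) (diag b) n y) \<le> e) U"
      using Z e unfolding Zp_def by blast
    then obtain n where "\<forall>y\<in>cball x0 (dist x0 x). cmod (seq_diff (diag a) (diag b) n y) \<le> e"
      using eventually_happens' np_bot[OF U] by blast
    thus ?thesis by (simp add: seq_diff_def diag_def)
  qed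
  hence "cmod (a x - b x) \<le> 0" by (metis dense_ge)
  thus "a x = b x" by simp
qed

lemma ideal: assumes a: "a \<in> C0" and F: "in_AcU U x0 F"
  shows "\<exists>b\<in>C0. in_I U x0 (seq_diff (seq_mult F (diag a)) (diag b))"
proof -
  obtain G where lF: "linf F" and G: "linf G" "uequiv U F G" "ueqc U x0 G"
    using F unfolding in_AcU_def by blast
  obtain M where GC: "\<forall>n. G n \<in> C0" and GM: "\<forall>n x. cmod (G n x) \<le> M" using G(1) linf_iff by blast
  interpret L: ulimit U x0 G M using U proper GC GM G(3) by unfold_locales
  define b where "b x = L.g x * a x" for x
  have gb: "\<forall>x. cmod (L.g x) \<le> M" using L.gb by blast
  have bC: "b \<in> C0" unfolding b_def using C0_mult(2)[OF a L.gcont gb] by blast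
  obtain Ba where Ba: "\<forall>x. cmod (a x) \<le> Ba" using C0_bounded a by blast
  have Z: "Zp U x0 (seq_diff (seq_mult F (diag a)) (diag b))" unfolding Zp_def
  proof (intro allI impI)
    fix r e :: real assume e: "e > 0"
    define e' where "e' = e / (2 * (\<bar>Ba\<bar> + 1))"
    have e': "e' > 0" unfolding e'_def using e by simp
    have "eventually (\<lambda>n. supn (\<lambda>x. F n x - G n x) < e') U" using uequiv_ev G(2) e' by blast
    moreover have "eventually (\<lambda>n. \<forall>x\<in>cball x0 r. cmod (G n x - L.g x) \<le> e') U" by (rule L.unif[OF e'])
    ultimately show "eventually (\<lambda>n. \<forall>x\<in>cball x0 r. cmod (seq_diff (seq_mult F (diag a)) (diag b) n x) \<le> e) U"
    proof eventually_elim
      case (elim n)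
      show ?case
      proof
        fix x assume x: "x \<in> cball x0 r"
        have 1: "cmod (F n x - G n x) \<le> e'" using linf_diff_bound[OF lF G(1), of n x] elim(1) by linarith
        have 2: "cmod (G n x - L.g x) \<le> e'" using elim(2) x by blast
        have "cmod (F n x - L.g x) \<le> cmod (F n x - G n x) + cmod (G n x - L.g x)"
          using norm_triangle_ineq[of "F n x - G n x" "G n x - L.g x"] by simp
        hence 3: "cmod (F n x - L.g x) \<le> 2 * e'" using 1 2 by linarith
        have "seq_diff (seq_mult F (diag a)) (diag b) n x = (F n x - L.g x) * a x"
          by (simp add: seq_diff_def seq_mult_def diag_def b_def algebra_simps)
        hence "cmod (seq_diff (seq_mult F (diag a)) (diag b) n x) = cmod (F n x - L.g x) * cmod (a x)"
          by (simp add: norm_mult)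
        also have "\<dots> \<le> (2 * e') * (\<bar>Ba\<bar> + 1)"
        proof (rule mult_mono)
          show "cmod (a x) \<le> \<bar>Ba\<bar> + 1" using Ba[rule_format, of x] by linarith
        qed (use 3 e' in auto)
        also have "\<dots> = e" unfolding e'_def
        proof -
          have "\<bar>Ba\<bar> + 1 > 0" by simp
          thus "2 * (e / (2 * (\<bar>Ba\<bar> + 1))) * (\<bar>Ba\<bar> + 1) = e" by (simp add: field_simps)
        qed
        finally show "cmod (seq_diff (seq_mult F (diag a)) (diag b) n x) \<le> e" .
      qed
    qed
  qed
  have "linf (seq_diff (seq_mult F (diag a)) (diag b))"
    using linf_diff linf_mult linf_diag lF a bC by blast
  thus ?thesis using Z bC I_iff by blast
qed

lemma essential: assumes F: "in_AcU U x0 F" and h: "\<forall>a\<in>C0. in_I U x0 (seq_mult F (diag a))"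
  shows "in_I U x0 F"
proof -
  have lF: "linf F" using F unfolding in_AcU_def by blast
  have "Zp U x0 F" unfolding Zp_def
  proof (intro allI impI)
    fix r e :: real assume e: "e > 0"
    have "cut x0 (r+1) \<in> C0" using cut_C0 proper by blast
    hence "Zp U x0 (seq_mult F (diag (cut x0 (r+1))))" using h I_iff by blast
    hence "eventually (\<lambda>n. \<forall>x\<in>cball x0 r. cmod (seq_mult F (diag (cut x0 (r+1))) n x) \<le> e) U"
      using e unfolding Zp_def by blast
    thus "eventually (\<lambda>n. \<forall>x\<in>cball x0 r. cmod (F n x) \<le> e) U"
    proof (rule eventually_mono, intro ballI)
      fix n x assume h: "\<forall>x\<in>cball x0 r. cmod (seq_mult F (diag (cut x0 (r+1))) n x) \<le> e" and x: "x \<in> cball x0 r"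
      have c1: "cut x0 (r+1) x = 1" using x by (intro cut_one) auto
      have "cmod (F n x * cut x0 (r+1) x) \<le> e" using h x by (simp add: seq_mult_def diag_def)
      thus "cmod (F n x) \<le> e" using c1 by simp
    qed
  qed
  thus ?thesis using lF I_iff by blast
qed

end

theorem mainTheorem4:
  fixes U :: "nat filter" and x0 :: "'a::{metric_space, second_countable_topology}"
  assumes U: "nonprincipal_ultrafilter U"
    and lc: "locally compact (UNIV :: 'a set)"
    and proper: "\<forall>r. compact (cball x0 r)"
  shows
    \<comment> \<open>(1) I is a closed two-sided ideal of A^U, contained in A^{cU}\<close>
    "in_I U x0 (seq_zero :: nat \<Rightarrow> 'a \<Rightarrow> complex)
     \<and> (\<forall>F G. in_I U x0 F \<longrightarrow> in_I U x0 G \<longrightarrow> in_I U x0 (seq_add F G))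
     \<and> (\<forall>c F. in_I U x0 F \<longrightarrow> in_I U x0 (seq_scale c F))
     \<and> (\<forall>F G. linf F \<longrightarrow> in_I U x0 G \<longrightarrow> in_I U x0 (seq_mult F G) \<and> in_I U x0 (seq_mult G F))
     \<and> (\<forall>F. linf F \<longrightarrow> (\<forall>e>0. \<exists>G. in_I U x0 G \<and> eventually (\<lambda>n. supn (\<lambda>x. F n x - G n x) < e) U)
            \<longrightarrow> in_I U x0 F)
     \<and> (\<forall>F. in_I U x0 F \<longrightarrow> in_AcU U x0 F)
    \<comment> \<open>(2) A^{cU}/I is unital\<close>
     \<and> (\<exists>E. in_AcU U x0 E \<and> (\<forall>F. in_AcU U x0 F \<longrightarrow>
            in_I U x0 (seq_diff (seq_mult E F) F) \<and> in_I U x0 (seq_diff (seq_mult F E) F)))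
    \<comment> \<open>(3) q x0 Delta : A \<rightarrow> A^{cU}/I is well defined and injective\<close>
     \<and> (\<forall>a\<in>C0. in_AcU U x0 (diag a))
     \<and> (\<forall>a\<in>C0. \<forall>b\<in>C0. in_I U x0 (seq_diff (diag a) (diag b)) \<longrightarrow> a = b)
    \<comment> \<open>(4) its image is a two-sided ideal of A^{cU}/I, and it is essential\<close>
     \<and> (\<forall>a\<in>C0. \<forall>F. in_AcU U x0 F \<longrightarrow>
            (\<exists>b\<in>C0. in_I U x0 (seq_diff (seq_mult F (diag a)) (diag b)))
          \<and> (\<exists>b\<in>C0. in_I U x0 (seq_diff (seq_mult (diag a) F) (diag b))))
     \<and> (\<forall>F. in_AcU U x0 F \<longrightarrow> (\<forall>a\<in>C0. in_I U x0 (seq_mult F (diag a))) \<longrightarrow> in_I U x0 F)"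
proof -
  have comm: "seq_mult (diag a) F = seq_mult F (diag a)" for a and F :: "nat \<Rightarrow> 'a \<Rightarrow> complex"
    by (simp add: seq_mult_def diag_def fun_eq_iff mult.commute)
  note I = I_iff[OF U proper]
  show ?thesis
  proof (intro conjI allI impI ballI)
    show "in_I U x0 (seq_zero :: nat \<Rightarrow> 'a \<Rightarrow> complex)" by (rule p_zero[OF U proper])
  next
    fix F G :: "nat \<Rightarrow> 'a \<Rightarrow> complex"
    assume "in_I U x0 F" "in_I U x0 G" thus "in_I U x0 (seq_add F G)" by (rule p_add[OF U proper])
  next
    fix c and F :: "nat \<Rightarrow> 'a \<Rightarrow> complex"
    assume "in_I U x0 F" thus "in_I U x0 (seq_scale c F)" by (rule p_scale[OF U proper])
  next
    fix F G :: "nat \<Rightarrow> 'a \<Rightarrow> complex"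
    assume "linf F" "in_I U x0 G" thus "in_I U x0 (seq_mult F G)" using p_mult[OF U proper] by blast
  next
    fix F G :: "nat \<Rightarrow> 'a \<Rightarrow> complex"
    assume "linf F" "in_I U x0 G" thus "in_I U x0 (seq_mult G F)" using p_mult[OF U proper] by blast
  next
    fix F :: "nat \<Rightarrow> 'a \<Rightarrow> complex"
    assume "linf F" "\<forall>e>0. \<exists>G. in_I U x0 G \<and> eventually (\<lambda>n. supn (\<lambda>x. F n x - G n x) < e) U"
    thus "in_I U x0 F" by (rule p_closed[OF U proper])
  next
    fix F :: "nat \<Rightarrow> 'a \<Rightarrow> complex"
    assume "in_I U x0 F" thus "in_AcU U x0 F" by (rule p_IAcU[OF U proper])
  next
    show "\<exists>E. in_AcU U x0 E \<and> (\<forall>F. in_AcU U x0 F \<longrightarrow>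
            in_I U x0 (seq_diff (seq_mult E F) F) \<and> in_I U x0 (seq_diff (seq_mult F E) F))"
      using E_AcU[OF U proper] E_unit[OF U proper] by blast
  next
    fix a :: "'a \<Rightarrow> complex" assume "a \<in> C0" thus "in_AcU U x0 (diag a)" by (rule diag_AcU[OF U proper])
  next
    fix a b :: "'a \<Rightarrow> complex" assume "a \<in> C0" "b \<in> C0" "in_I U x0 (seq_diff (diag a) (diag b))"
    thus "a = b" by (rule diag_inj[OF U proper])
  next
    fix a :: "'a \<Rightarrow> complex" and F assume "a \<in> C0" "in_AcU U x0 F"
    thus "\<exists>b\<in>C0. in_I U x0 (seq_diff (seq_mult F (diag a)) (diag b))" by (rule ideal[OF U proper])
  next
    fix a :: "'a \<Rightarrow> complex" and F assume "a \<in> C0" "in_AcU U x0 F"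
    thus "\<exists>b\<in>C0. in_I U x0 (seq_diff (seq_mult (diag a) F) (diag b))" unfolding comm by (rule ideal[OF U proper])
  next
    fix F :: "nat \<Rightarrow> 'a \<Rightarrow> complex"
    assume "in_AcU U x0 F" "\<forall>a\<in>C0. in_I U x0 (seq_mult F (diag a))"
    thus "in_I U x0 F" by (rule essential[OF U proper])
  qed
qed

end
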